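(* Let $n \ge 0$ and let $A_n$ be the $n$th Laver table. For $k \ge 1$ let $C_k(A_n)$ be the free $\mathbb{Z}$-module with basis $A_n^k$, let $C_0(A_n) = \mathbb{Z}$ (its basis element $1$ identified with the empty tuple), and for $k \ge 1$ let $\partial^*_k : C_k(A_n) \to C_{k-1}(A_n)$ be the $\mathbb{Z}$-linear map given on basis elements by $$\partial^*_k(x_1, \dots, x_k) = \sum_{i=1}^k (-1)^{i-1} (x_1, \dots, x_{i-1},\ x_i * x_{i+1}, \dots, x_i * x_k),$$ and let $\partial^*_0 = 0$. Then the chain complex $(C_k(A_n), \partial^*_k)_{k \ge 0}$ is acyclic: for every $k \ge 0$ one has $\ker \partial^*_k = \operatorname{im} \partial^*_{k+1}$, i.e.\ all its homology groups are trivial.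
   Context: For $N \ge 1$ there is a unique binary operation $*$ on $\{1, \dots, N\}$ such that, for all $p, q$, one has $p * 1 = p+1$ for $p < N$, $N * 1 = 1$, and $p * (q * 1) = (p * q) * (p * 1)$. For $N = 2^n$ this operation satisfies the left-selfdistributive law $x*(y*z) = (x*y)*(x*z)$; the structure $(\{1, \dots, 2^n\}, * )$ is called the $n$th Laver table and denoted $A_n$. *)

theory Defs
  imports Main
begin

text \<open>Outside the carrier the function is normalised to 0 so that it is unique.\<close>

definition is_laver_op :: "nat \<Rightarrow> (nat \<Rightarrow> nat \<Rightarrow> nat) \<Rightarrow> bool" where
  "is_laver_op N f \<longleftrightarrow>
     (\<forall>p q. (p \<notin> {1..N} \<or> q \<notin> {1..N}) \<longrightarrow> f p q = 0) \<and>
     (\<forall>p\<in>{1..N}. \<forall>q\<in>{1..N}. f p q \<in> {1..N}) \<and>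
     (\<forall>p\<in>{1..N}. p < N \<longrightarrow> f p 1 = p + 1) \<and>
     f N 1 = 1 \<and>
     (\<forall>p\<in>{1..N}. \<forall>q\<in>{1..N}. f p (f q 1) = f (f p q) (f p 1))"

definition laver :: "nat \<Rightarrow> nat \<Rightarrow> nat \<Rightarrow> nat" where
  "laver n = (THE f. is_laver_op (2 ^ n) f)"

definition tuples :: "nat \<Rightarrow> nat \<Rightarrow> nat list set" where
  "tuples n k = {xs. length xs = k \<and> set xs \<subseteq> {1..2 ^ n}}"

text \<open>C_k(A_n): integer-valued functions supported on the basis (formal Z-combinations).\<close>
definition chains :: "nat \<Rightarrow> nat \<Rightarrow> (nat list \<Rightarrow> int) set" where
  "chains n k = {c. \<forall>xs. c xs \<noteq> 0 \<longrightarrow> xs \<in> tuples n k}"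

text \<open>The i-th face (0-indexed): (x_1,...,x_i, x_{i+1} * x_{i+2}, ..., x_{i+1} * x_k).\<close>
definition face :: "nat \<Rightarrow> nat \<Rightarrow> nat list \<Rightarrow> nat list" where
  "face n i xs = take i xs @ map (\<lambda>y. laver n (xs ! i) y) (drop (Suc i) xs)"

definition bdry :: "nat \<Rightarrow> nat \<Rightarrow> (nat list \<Rightarrow> int) \<Rightarrow> (nat list \<Rightarrow> int)" where
  "bdry n k c = (\<lambda>ys. \<Sum>xs\<in>tuples n k. \<Sum>i<k.
      (-1) ^ i * c xs * (if face n i xs = ys then 1 else 0))"

end

theory Submission
  imports Defs
begin


lemma lop_range:
  assumes L: "is_laver_op N f" "p \<in> {1..N}" "q \<in> {1..N}"
  shows "f p q \<in> {1..N}"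
  using assms unfolding is_laver_op_def by blast

lemma lop_one:
  assumes L: "is_laver_op N f" "p \<in> {1..N}" "p < N"
  shows "f p 1 = Suc p"
  using assms unfolding is_laver_op_def by auto

lemma lop_cond:
  assumes L: "is_laver_op N f" "p \<in> {1..N}" "q \<in> {1..N}"
  shows "f p (f q 1) = f (f p q) (f p 1)"
  using assms unfolding is_laver_op_def by blast

lemma lop_top:
  assumes L: "is_laver_op N f" and q: "q \<in> {1..N}"
  shows "f N q = q"
  using q
proof (induction q)
  case 0 then show ?case by simp
next
  case (Suc q)
  show ?case
  proof (cases "q = 0")
    case True then show ?thesis using L unfolding is_laver_op_def by simp
  next
    case False
    hence q1: "q \<in> {1..N}" "q < N" using Suc.prems by auto
    have "f q 1 = Suc q" using lop_one[OF L q1] .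
    moreover have "f N (f q 1) = f (f N q) (f N 1)"
      using lop_cond[OF L _ q1(1)] q1 by auto
    moreover have "f N 1 = 1" using L unfolding is_laver_op_def by auto
    ultimately show ?thesis using Suc.IH q1 by simp
  qed
qed

lemma lop_gt:
  assumes L: "is_laver_op N f"
  shows "p \<in> {1..N} \<Longrightarrow> p < N \<Longrightarrow> q \<in> {1..N} \<Longrightarrow> f p q > p"
proof (induction "N - p" arbitrary: p q rule: less_induct)
  case less
  show ?case using less.prems(3)
  proof (induction q)
    case 0 then show ?case by simp
  next
    case (Suc q)
    show ?case
    proof (cases "q = 0")
      case True then show ?thesis using lop_one[OF L less.prems(1,2)] by simp
    next
      case False
      hence q1: "q \<in> {1..N}" "q < N" using Suc.prems by auto
      have e: "f p (Suc q) = f (f p q) (Suc p)"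
        using lop_cond[OF L less.prems(1) q1(1)] lop_one[OF L q1] lop_one[OF L less.prems(1,2)] by simp
      have gt: "f p q > p" using Suc.IH q1 by simp
      have r: "f p q \<in> {1..N}" using lop_range[OF L less.prems(1) q1(1)] .
      show ?thesis
      proof (cases "f p q = N")
        case True then show ?thesis using e lop_top[OF L, of "Suc p"] less.prems by auto
      next
        case False
        have "f (f p q) (Suc p) > f p q"
          using less.hyps[of "f p q" "Suc p"] gt r False less.prems by auto
        then show ?thesis using e gt by simp
      qed
    qed
  qed
qed

lemma lop_N:
  assumes L: "is_laver_op N f" and p: "p \<in> {1..N}"
  shows "f p N = N"
proof (cases "p = N")
  case True then show ?thesis using lop_top[OF L] p by auto
next
  case False
  hence pN: "p < N" using p by auto
  have N1: "N \<in> {1..N}" using p by auto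
  have "f p (f N 1) = f (f p N) (f p 1)" using lop_cond[OF L p N1] .
  hence e: "Suc p = f (f p N) (Suc p)"
    using L lop_one[OF L p pN] unfolding is_laver_op_def by auto
  have r: "f p N \<in> {1..N}" using lop_range[OF L p N1] .
  have g: "f p N > p" using lop_gt[OF L p pN N1] .
  show ?thesis
  proof (rule ccontr)
    assume "f p N \<noteq> N"
    hence "f (f p N) (Suc p) > f p N" using lop_gt[OF L r, of "Suc p"] r pN by auto
    then show False using e g by simp
  qed
qed

lemma lop_LD:
  assumes L: "is_laver_op N f"
  shows "p \<in> {1..N} \<Longrightarrow> q \<in> {1..N} \<Longrightarrow> r \<in> {1..N} \<Longrightarrow>
    f p (f q r) = f (f p q) (f p r)"
proof (induction "N - p" arbitrary: p q r rule: less_induct)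
  case lessp: less
  show ?case
  proof (cases "p = N")
    case True
    then show ?thesis using lop_top[OF L] lop_range[OF L] lessp.prems by simp
  next
    case pN: False
    hence pN: "p < N" using lessp.prems by auto
    note p = lessp.prems(1)
    show ?thesis using lessp.prems(2,3)
    proof (induction "N - q" arbitrary: q r rule: less_induct)
      case lessq: less
      note q = lessq.prems(1)
      show ?case
      proof (cases "q = N")
        case True
        then show ?thesis using lop_top[OF L] lop_range[OF L] lop_N[OF L p] lessq.prems p by simp
      next
        case False
        hence qN: "q < N" using q by auto
        show ?thesis using lessq.prems(2)
        proof (induction r)
          case 0 then show ?case by simp
        next
          case (Suc r)
          show ?case
          proof (cases "r = 0")
            case True
            then show ?thesis using lop_cond[OF L p q] by simp
          next
            case False
            hence r: "r \<in> {1..N}" "r < N" using Suc.prems by auto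
            have r1: "f r 1 = Suc r" using lop_one[OF L r] .
            have q1: "f q 1 \<in> {1..N}" "f q 1 > q" using lop_one[OF L q qN] qN by auto
            have qr: "f q r \<in> {1..N}" "f q r > q" using lop_range[OF L q r(1)] lop_gt[OF L q qN r(1)] by auto
            have pq: "f p q \<in> {1..N}" "f p q > p" using lop_range[OF L p q] lop_gt[OF L p pN q] by auto
            have pr: "f p r \<in> {1..N}" using lop_range[OF L p r(1)] .
            have p1: "f p 1 \<in> {1..N}" using lop_one[OF L p pN] pN by auto
            have "f p (f q (Suc r)) = f p (f (f q r) (f q 1))"
              using lop_cond[OF L q r(1)] r1 by simp
            also have "\<dots> = f (f p (f q r)) (f p (f q 1))"
              using lessq.hyps[of "f q r" "f q 1"] qr q1 qN by auto
            also have "\<dots> = f (f (f p q) (f p r)) (f (f p q) (f p 1))"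
              using Suc.IH r lop_cond[OF L p q] by simp
            also have "\<dots> = f (f p q) (f (f p r) (f p 1))"
              using lessp.hyps[of "f p q" "f p r" "f p 1"] pq pr p1 pN by auto
            also have "\<dots> = f (f p q) (f p (Suc r))"
              using lop_cond[OF L p r(1)] r1 by simp
            finally show ?thesis .
          qed
        qed
      qed
    qed
  qed
qed

lemma lop_unique:
  assumes L: "is_laver_op N f" and G: "is_laver_op N g"
  shows "f = g"
proof -
  have main: "p \<in> {1..N} \<Longrightarrow> q \<in> {1..N} \<Longrightarrow> f p q = g p q" for p q
  proof (induction "N - p" arbitrary: p q rule: less_induct)
    case less
    show ?case
    proof (cases "p = N")
      case True then show ?thesis using lop_top[OF L] lop_top[OF G] less.prems by simp
    next
      case False
      hence pN: "p < N" using less.prems by auto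
      show ?thesis using less.prems(2)
      proof (induction q)
        case 0 then show ?case by simp
      next
        case (Suc q)
        show ?case
        proof (cases "q = 0")
          case True then show ?thesis using lop_one[OF L less.prems(1) pN] lop_one[OF G less.prems(1) pN] by simp
        next
          case False
          hence q: "q \<in> {1..N}" "q < N" using Suc.prems by auto
          have "f p (Suc q) = f (f p q) (f p 1)" using lop_cond[OF L less.prems(1) q(1)] lop_one[OF L q] by simp
          also have "\<dots> = f (g p q) (Suc p)" using Suc.IH q lop_one[OF L less.prems(1) pN] by simp
          also have "\<dots> = g (g p q) (Suc p)"
            using less.hyps[of "g p q" "Suc p"] lop_gt[OF G less.prems(1) pN q(1)] lop_range[OF G less.prems(1) q(1)] pN by auto
          also have "\<dots> = g p (Suc q)" using lop_cond[OF G less.prems(1) q(1)] lop_one[OF G q] lop_one[OF G less.prems(1) pN] by simp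
          finally show ?thesis .
        qed
      qed
    qed
  qed
  show ?thesis
  proof (intro ext)
    fix p q show "f p q = g p q"
      using main[of p q] L G unfolding is_laver_op_def by metis
  qed
qed



lemma lop_period:
  assumes A: "is_laver_op N A" and p: "p \<in> {1..N}"
  shows "\<exists>P. 1 \<le> P \<and> P dvd N \<and> (\<forall>q\<in>{1..N}. A p q = N \<longleftrightarrow> P dvd q)"
proof -
  define P where "P = (LEAST q. 1 \<le> q \<and> A p q = N)"
  have ex: "1 \<le> N \<and> A p N = N" using lop_N[OF A p] p by auto
  have P1: "1 \<le> P \<and> A p P = N" unfolding P_def using LeastI[of "\<lambda>q. 1 \<le> q \<and> A p q = N", OF ex] .
  have PN: "P \<le> N" unfolding P_def using Least_le[of "\<lambda>q. 1 \<le> q \<and> A p q = N", OF ex] .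
  have mn: "1 \<le> q \<Longrightarrow> q < P \<Longrightarrow> A p q \<noteq> N" for q
    unfolding P_def using not_less_Least[of q "\<lambda>q. 1 \<le> q \<and> A p q = N"] by auto
  have A1: "A p 1 \<in> {1..N}" using lop_range[OF A p, of 1] p by auto
  have shift: "1 \<le> q \<Longrightarrow> q + P \<le> N \<Longrightarrow> A p (q + P) = A p q" for q
  proof (induction q)
    case 0 then show ?case by simp
  next
    case (Suc q)
    show ?case
    proof (cases "q = 0")
      case True
      have PN': "P \<in> {1..N}" "P < N" using Suc.prems P1 True by auto
      have "A p (A P 1) = A (A p P) (A p 1)" using lop_cond[OF A p PN'(1)] .
      then show ?thesis using lop_one[OF A PN'] P1 lop_top[OF A A1] True by simp
    next
      case False
      have qP: "q + P \<in> {1..N}" "q + P < N" "q \<in> {1..N}" "q < N" using Suc.prems False by auto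
      have "A p (Suc q + P) = A p (A (q + P) 1)" using lop_one[OF A qP(1,2)] by simp
      also have "\<dots> = A (A p (q + P)) (A p 1)" using lop_cond[OF A p qP(1)] .
      also have "\<dots> = A (A p q) (A p 1)" using Suc.IH False Suc.prems by simp
      also have "\<dots> = A p (A q 1)" using lop_cond[OF A p qP(3)] by simp
      also have "\<dots> = A p (Suc q)" using lop_one[OF A qP(3,4)] by simp
      finally show ?thesis .
    qed
  qed
  have red: "q \<in> {1..N} \<Longrightarrow> A p q = A p ((q - 1) mod P + 1)" for q
  proof (induction q rule: less_induct)
    case (less q)
    show ?case
    proof (cases "q \<le> P")
      case True
      have "(q - 1) mod P = q - 1" using True less.prems by (intro mod_less) auto
      then show ?thesis using less.prems by simp
    next
      case False
      have "A p q = A p ((q - P) + P)" using False by simp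
      also have "\<dots> = A p (q - P)" using shift[of "q - P"] False less.prems by simp
      also have "\<dots> = A p ((q - P - 1) mod P + 1)"
      proof -
        have "q - P \<in> {1..N}" "q - P < q" using False less.prems P1 by auto
        then show ?thesis using less.IH[of "q - P"] by blast
      qed
      also have "(q - P - 1) mod P = (q - 1) mod P"
      proof -
        have "q - 1 = (q - P - 1) + P" using False by simp
        then show ?thesis by (metis mod_add_self2)
      qed
      finally show ?thesis .
    qed
  qed
  have dv: "q \<in> {1..N} \<Longrightarrow> A p q = N \<longleftrightarrow> P dvd q" for q
  proof -
    assume q: "q \<in> {1..N}"
    obtain m where m: "q = Suc m" using q by (cases q) auto
    have lt: "m mod P < P" using P1 by simp
    have "A p q = A p (m mod P + 1)" using red[OF q] m by simp
    moreover have "A p (m mod P + 1) = N \<longleftrightarrow> m mod P + 1 = P"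
      using mn[of "m mod P + 1"] lt P1 by (cases "m mod P + 1 = P") auto
    moreover have "m mod P + 1 = P \<longleftrightarrow> P dvd q"
      using m mod_Suc[of m P] by (auto simp: dvd_eq_mod_eq_0)
    ultimately show ?thesis by simp
  qed
  have "P dvd N" using dv[of N] ex by simp
  then show ?thesis using P1 dv by blast
qed



definition prj :: "nat \<Rightarrow> nat \<Rightarrow> nat" where "prj N x = (if x \<le> N then x else x - N)"

definition extr :: "(nat \<Rightarrow> nat \<Rightarrow> nat) \<Rightarrow> nat \<Rightarrow> nat \<Rightarrow> nat \<Rightarrow> nat" where
  "extr g a = g(a := (\<lambda>q. ((\<lambda>y. g y (Suc a)) ^^ (q - 1)) (Suc a)))"

definition Inv :: "nat \<Rightarrow> nat \<Rightarrow> (nat \<Rightarrow> nat \<Rightarrow> nat) \<Rightarrow> nat \<Rightarrow> (nat \<Rightarrow> nat \<Rightarrow> nat) \<Rightarrow> bool" where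
  "Inv N M A a g \<longleftrightarrow>
   (\<forall>p\<in>{a..M}. \<forall>q\<in>{1..M}. g p q \<in> {1..M}) \<and>
   (\<forall>q\<in>{1..M}. g M q = q) \<and>
   (\<forall>p\<in>{a..<M}. g p 1 = Suc p) \<and>
   (\<forall>p\<in>{a..<M}. \<forall>q\<in>{1..<M}. g p (Suc q) = g (g p q) (Suc p)) \<and>
   (\<forall>p\<in>{a..<M}. g p M = M) \<and>
   (\<forall>p\<in>{a..<M}. \<forall>q\<in>{1..M}. p < g p q) \<and>
   (\<forall>p\<in>{a..M}. \<forall>q\<in>{1..M}. prj N (g p q) = A (prj N p) (prj N q))"

lemma prj_range: "M = 2 * N \<Longrightarrow> x \<in> {1..M} \<Longrightarrow> prj N x \<in> {1..N}"
  unfolding prj_def by auto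

lemma prj_suc:
  assumes A: "is_laver_op N A" and M: "M = 2 * N" and q: "q \<in> {1..<M}"
  shows "prj N (Suc q) = A (prj N q) 1"
proof -
  consider "q < N" | "q = N" | "q > N" by linarith
  then show ?thesis
  proof cases
    case 1 then show ?thesis using lop_one[OF A, of q] q unfolding prj_def by auto
  next
    case 2 then show ?thesis using A q unfolding prj_def is_laver_op_def by auto
  next
    case 3
    have "A (q - N) 1 = Suc (q - N)" using lop_one[OF A, of "q - N"] 3 q M by auto
    then show ?thesis using 3 unfolding prj_def by auto
  qed
qed

lemma prj_dvd:
  assumes M: "M = 2 * N" and P: "P dvd N" and q: "q \<in> {1..M}"
  shows "P dvd prj N q \<longleftrightarrow> P dvd q"
proof (cases "q \<le> N")
  case True then show ?thesis unfolding prj_def by simp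
next
  case False
  have "q = (q - N) + N" using False by simp
  then have "P dvd q \<longleftrightarrow> P dvd (q - N)" using P by (metis dvd_add_left_iff)
  then show ?thesis using False unfolding prj_def by simp
qed

lemma step:
  assumes A: "is_laver_op N A" and N1: "1 \<le> N" and M: "M = 2 * N"
    and I: "Inv N M A (Suc a) g" and a: "1 \<le> a" "a < M"
  shows "Inv N M A a (extr g a)"
proof -
  define x where "x = (\<lambda>q. ((\<lambda>y. g y (Suc a)) ^^ (q - 1)) (Suc a))"
  have xe: "extr g a = g(a := x)" unfolding extr_def x_def by simp
  have x1: "x 1 = Suc a" unfolding x_def by simp
  have xS: "1 \<le> q \<Longrightarrow> x (Suc q) = g (x q) (Suc a)" for q
    unfolding x_def by (cases q) auto
  have Ir: "p\<in>{Suc a..M} \<Longrightarrow> q\<in>{1..M} \<Longrightarrow> g p q \<in> {1..M}" for p q using I unfolding Inv_def by blast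
  have It: "q\<in>{1..M} \<Longrightarrow> g M q = q" for q using I unfolding Inv_def by blast
  have I1: "p\<in>{Suc a..<M} \<Longrightarrow> g p 1 = Suc p" for p using I unfolding Inv_def by blast
  have IS: "p\<in>{Suc a..<M} \<Longrightarrow> q\<in>{1..<M} \<Longrightarrow> g p (Suc q) = g (g p q) (Suc p)" for p q
    using I unfolding Inv_def by blast
  have IM: "p\<in>{Suc a..<M} \<Longrightarrow> g p M = M" for p using I unfolding Inv_def by blast
  have Igt: "p\<in>{Suc a..<M} \<Longrightarrow> q\<in>{1..M} \<Longrightarrow> p < g p q" for p q using I unfolding Inv_def by blast
  have Ih: "p\<in>{Suc a..M} \<Longrightarrow> q\<in>{1..M} \<Longrightarrow> prj N (g p q) = A (prj N p) (prj N q)" for p q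
    using I unfolding Inv_def by blast
  have sa: "Suc a \<in> {1..M}" using a by auto
  have F1: "1 \<le> q \<Longrightarrow> x q \<in> {Suc a..M}" for q
  proof (induction q)
    case 0 then show ?case by simp
  next
    case (Suc q)
    show ?case
    proof (cases "q = 0")
      case True then show ?thesis using x1 a by simp
    next
      case False
      hence xq: "x q \<in> {Suc a..M}" using Suc.IH by simp
      have e: "x (Suc q) = g (x q) (Suc a)" using xS False by simp
      show ?thesis
      proof (cases "x q = M")
        case True then show ?thesis using e It[OF sa] a by simp
      next
        case False
        have "x q < g (x q) (Suc a)" using Igt[of "x q" "Suc a"] xq False sa by auto
        then show ?thesis using e Ir[OF xq sa] xq by auto
      qed
    qed
  qed
  have pa: "prj N a \<in> {1..N}" using prj_range[OF M, of a] a by auto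
  have F2: "q \<in> {1..M} \<Longrightarrow> prj N (x q) = A (prj N a) (prj N q)" for q
  proof (induction q)
    case 0 then show ?case by simp
  next
    case (Suc q)
    show ?case
    proof (cases "q = 0")
      case True
      have "prj N (Suc a) = A (prj N a) 1" using prj_suc[OF A M, of a] a by auto
      moreover have "prj N 1 = 1" unfolding prj_def using N1 by simp
      ultimately show ?thesis using x1 True by simp
    next
      case False
      hence q: "q \<in> {1..<M}" "q \<in> {1..M}" using Suc.prems by auto
      have xq: "x q \<in> {Suc a..M}" using F1 False by simp
      have pq: "prj N q \<in> {1..N}" using prj_range[OF M q(2)] .
      have "prj N (x (Suc q)) = prj N (g (x q) (Suc a))" using xS False by simp
      also have "\<dots> = A (prj N (x q)) (prj N (Suc a))" using Ih[OF xq sa] .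
      also have "\<dots> = A (A (prj N a) (prj N q)) (A (prj N a) 1)"
        using Suc.IH q prj_suc[OF A M, of a] a by auto
      also have "\<dots> = A (prj N a) (A (prj N q) 1)" using lop_cond[OF A pa pq] by simp
      also have "\<dots> = A (prj N a) (prj N (Suc q))" using prj_suc[OF A M q(1)] by simp
      finally show ?thesis .
    qed
  qed
  have F3: "x q = M \<Longrightarrow> 1 \<le> q \<Longrightarrow> 1 \<le> j \<Longrightarrow> x (q + j) = x j" for q j
  proof (induction j)
    case 0 then show ?case by simp
  next
    case (Suc j)
    show ?case
    proof (cases "j = 0")
      case True then show ?thesis using xS[of q] Suc.prems It[OF sa] x1 by simp
    next
      case False
      have "x (q + Suc j) = g (x (q + j)) (Suc a)" using xS[of "q + j"] Suc.prems by simp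
      also have "\<dots> = g (x j) (Suc a)" using Suc.IH Suc.prems False by simp
      also have "\<dots> = x (Suc j)" using xS[of j] False by simp
      finally show ?thesis .
    qed
  qed
  have F3': "x q = M \<Longrightarrow> 1 \<le> q \<Longrightarrow> 1 \<le> m \<Longrightarrow> x (m * q) = M" for q m
  proof (induction m)
    case 0 then show ?case by simp
  next
    case (Suc m)
    show ?case
    proof (cases "m = 0")
      case True then show ?thesis using Suc.prems by simp
    next
      case False
      have "x (Suc m * q) = x (m * q + q)" by (simp add: add.commute)
      also have "\<dots> = x q" using F3[of "m * q" q] Suc False by simp
      finally show ?thesis using Suc.prems by simp
    qed
  qed
  have F4: "1 \<le> q \<Longrightarrow> x q < M \<Longrightarrow> x q < x (Suc q)" for q
    using xS[of q] Igt[of "x q" "Suc a"] F1[of q] sa by auto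
  obtain P where P: "1 \<le> P" "P dvd N" "\<forall>q\<in>{1..N}. A (prj N a) q = N \<longleftrightarrow> P dvd q"
    using lop_period[OF A pa] by blast
  have F5: "q \<in> {1..M} \<Longrightarrow> (x q = N \<or> x q = M) \<longleftrightarrow> P dvd q" for q
  proof -
    assume q: "q \<in> {1..M}"
    have xr: "x q \<in> {1..M}" using F1[of q] q by auto
    have "(x q = N \<or> x q = M) \<longleftrightarrow> prj N (x q) = N"
      using xr M unfolding prj_def by auto
    also have "\<dots> \<longleftrightarrow> A (prj N a) (prj N q) = N" using F2[OF q] by simp
    also have "\<dots> \<longleftrightarrow> P dvd prj N q" using P(3) prj_range[OF M q] by blast
    also have "\<dots> \<longleftrightarrow> P dvd q" using prj_dvd[OF M P(2) q] .
    finally show ?thesis .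
  qed
  have PN: "P \<le> N" using P N1 by (simp add: dvd_imp_le)
  have xP: "x P = N \<or> x P = M" using F5[of P] P PN M by auto
  have good: "x M = M"
  proof (cases "x P = M")
    case True
    obtain k where k: "N = P * k" using P(2) by blast
    have "M = (2 * k) * P" using k M by simp
    moreover have "1 \<le> 2 * k" using k N1 by (cases k) auto
    ultimately show ?thesis using F3'[OF True P(1)] by metis
  next
    case False
    hence xPN: "x P = N" using xP by simp
    have up: "i \<in> {1..P} \<Longrightarrow> N < x (P + i)" for i
    proof (induction i)
      case 0 then show ?case by simp
    next
      case (Suc i)
      show ?case
      proof (cases "i = 0")
        case True then show ?thesis using F4[of P] xPN P M N1 by simp
      next
        case False
        have h: "N < x (P + i)" using Suc False by simp
        have nd: "\<not> P dvd (P + i)"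
        proof
          assume "P dvd (P + i)"
          hence "P dvd i" by (simp add: dvd_add_right_iff)
          hence "P \<le> i" using False by (simp add: dvd_imp_le)
          then show False using Suc.prems by simp
        qed
        have "P + i \<in> {1..M}" using Suc.prems PN M by auto
        hence "x (P + i) \<noteq> M" using F5[of "P + i"] nd by auto
        hence "x (P + i) < M" using F1[of "P + i"] P(1) by auto
        then show ?thesis using F4[of "P + i"] h P(1) by simp
      qed
    qed
    have "N < x (2 * P)" using up[of P] P by (simp add: mult_2)
    moreover have "x (2 * P) = N \<or> x (2 * P) = M" using F5[of "2 * P"] P PN M by auto
    ultimately have x2P: "x (2 * P) = M" by auto
    obtain k where k: "N = P * k" using P(2) by blast
    have "M = k * (2 * P)" using k M by simp
    moreover have "1 \<le> k" using k N1 by (cases k) auto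
    moreover have "1 \<le> 2 * P" using P by simp
    ultimately show ?thesis using F3'[OF x2P] by metis
  qed
  let ?h = "g(a := x)"
  have ne: "p\<in>{Suc a..M} \<Longrightarrow> ?h p = g p" for p by auto
  have "Inv N M A a ?h"
    unfolding Inv_def
  proof (intro conjI ballI)
    fix p q assume p: "p \<in> {a..M}" and q: "q \<in> {1..M}"
    show "?h p q \<in> {1..M}"
      using F1[of q] Ir[of p q] p q by (cases "p = a") auto
    show "prj N (?h p q) = A (prj N p) (prj N q)"
      using F2[OF q] Ih[of p q] p q by (cases "p = a") auto
  next
    fix q assume q: "q \<in> {1..M}" show "?h M q = q" using It[OF q] a by simp
  next
    fix p assume p: "p \<in> {a..<M}"
    show "?h p 1 = Suc p" using x1 I1[of p] p by (cases "p = a") auto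
    show "?h p M = M" using good IM[of p] p by (cases "p = a") auto
  next
    fix p q assume p: "p \<in> {a..<M}" and q: "q \<in> {1..M}"
    show "p < ?h p q" using F1[of q] Igt[of p q] p q by (cases "p = a") auto
  next
    fix p q assume p: "p \<in> {a..<M}" and q: "q \<in> {1..<M}"
    show "?h p (Suc q) = ?h (?h p q) (Suc p)"
    proof (cases "p = a")
      case True
      have "x q \<noteq> a" using F1[of q] q by auto
      then show ?thesis using True xS[of q] q by simp
    next
      case False
      hence p': "p \<in> {Suc a..<M}" using p by auto
      have "g p q \<noteq> a" using Igt[of p q] p' q by auto
      then show ?thesis using False IS[OF p' q] by simp
    qed
  qed
  then show ?thesis using xe by simp
qed



lemma build:
  assumes A: "is_laver_op N A" and N1: "1 \<le> N"
  shows "\<exists>f. is_laver_op (2 * N) f"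
proof -
  define M where "M = 2 * N"
  have all: "1 \<le> a \<Longrightarrow> a \<le> M \<Longrightarrow> \<exists>g. Inv N M A a g" for a
  proof (induction "M - a" arbitrary: a rule: less_induct)
    case less
    show ?case
    proof (cases "a = M")
      case True
      have "Inv N M A a (\<lambda>p q. q)"
        unfolding Inv_def
      proof (intro conjI ballI)
        fix p q assume p: "p \<in> {a..M}" and q: "q \<in> {1..M}"
        have "p = M" using p True by auto
        moreover have "prj N M = N" unfolding prj_def M_def using N1 by simp
        ultimately show "prj N q = A (prj N p) (prj N q)"
          using lop_top[OF A prj_range[OF M_def q]] by simp
      qed (use True in auto)
      then show ?thesis by blast
    next
      case False
      have lt: "M - Suc a < M - a" "1 \<le> Suc a" "Suc a \<le> M" using less.prems False by auto
      obtain g where g: "Inv N M A (Suc a) g" using less.hyps[OF lt] by blast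
      have "a < M" using less.prems False by auto
      then have "Inv N M A a (extr g a)" using step[OF A N1 M_def g] less.prems by auto
      then show ?thesis by blast
    qed
  qed
  obtain g where I: "Inv N M A 1 g" using all[of 1] M_def N1 by auto
  define f where "f = (\<lambda>p q. if p \<in> {1..M} \<and> q \<in> {1..M} then g p q else 0)"
  have Ir: "p\<in>{1..M} \<Longrightarrow> q\<in>{1..M} \<Longrightarrow> g p q \<in> {1..M}" for p q using I unfolding Inv_def by blast
  have It: "q\<in>{1..M} \<Longrightarrow> g M q = q" for q using I unfolding Inv_def by blast
  have I1: "p\<in>{1..<M} \<Longrightarrow> g p 1 = Suc p" for p using I unfolding Inv_def by blast
  have IS: "p\<in>{1..<M} \<Longrightarrow> q\<in>{1..<M} \<Longrightarrow> g p (Suc q) = g (g p q) (Suc p)" for p q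
    using I unfolding Inv_def by blast
  have IM: "p\<in>{1..<M} \<Longrightarrow> g p M = M" for p using I unfolding Inv_def by blast
  have M1: "1 \<le> M" using N1 M_def by simp
  have "is_laver_op M f"
    unfolding is_laver_op_def
  proof (intro conjI ballI allI impI)
    fix p q assume "p \<notin> {1..M} \<or> q \<notin> {1..M}" then show "f p q = 0" unfolding f_def by auto
  next
    fix p q assume "p \<in> {1..M}" "q \<in> {1..M}" then show "f p q \<in> {1..M}" unfolding f_def using Ir by auto
  next
    fix p assume "p \<in> {1..M}" "p < M" then show "f p 1 = p + 1" unfolding f_def using I1 M1 by auto
  next
    show "f M 1 = 1" unfolding f_def using It M1 by auto
  next
    fix p q assume p: "p \<in> {1..M}" and q: "q \<in> {1..M}"
    have f1: "f p 1 = (if p = M then 1 else Suc p)" unfolding f_def using I1 It M1 p by auto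
    show "f p (f q 1) = f (f p q) (f p 1)"
    proof (cases "q = M")
      case True
      have "f p M = M" unfolding f_def using IM It p M1 by (cases "p = M") auto
      then show ?thesis using True f1 It M1 p unfolding f_def by auto
    next
      case qM: False
      hence fq: "f q 1 = Suc q" unfolding f_def using I1 q M1 by auto
      show ?thesis
      proof (cases "p = M")
        case True
        then show ?thesis using fq It q qM M1 unfolding f_def by auto
      next
        case False
        then show ?thesis using fq IS[of p q] p q qM Ir[of p q] f1 unfolding f_def by auto
      qed
    qed
  qed
  then show ?thesis unfolding M_def by blast
qed

lemma laver_exists: "\<exists>f. is_laver_op (2 ^ n) f"
proof (induction n)
  case 0
  have "is_laver_op 1 (\<lambda>p q. if p = 1 \<and> q = 1 then 1 else 0)"
    unfolding is_laver_op_def by auto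
  then show ?case by auto
next
  case (Suc n)
  then obtain A where "is_laver_op (2 ^ n) A" by blast
  from build[OF this] show ?case by simp
qed

lemma laver_op: "is_laver_op (2 ^ n) (laver n)"
proof -
  have "\<exists>!f. is_laver_op (2 ^ n) f" using laver_exists lop_unique by blast
  then show ?thesis unfolding laver_def by (rule theI')
qed

lemma laver_range: "p \<in> {1..2^n} \<Longrightarrow> q \<in> {1..2^n} \<Longrightarrow> laver n p q \<in> {1..2^n}"
  using lop_range[OF laver_op] .

lemma laver_top: "q \<in> {1..2^n} \<Longrightarrow> laver n (2^n) q = q"
  using lop_top[OF laver_op] .

lemma laver_LD: "p \<in> {1..2^n} \<Longrightarrow> q \<in> {1..2^n} \<Longrightarrow> r \<in> {1..2^n} \<Longrightarrow>
   laver n p (laver n q r) = laver n (laver n p q) (laver n p r)"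
  using lop_LD[OF laver_op] .



lemma fin_tuples: "finite (tuples n k)"
proof -
  have "tuples n k = {xs. set xs \<subseteq> {1..2^n} \<and> length xs = k}" unfolding tuples_def by auto
  then show ?thesis using finite_lists_length_eq[of "{1..(2::nat)^n}" k] by simp
qed

lemma face_len: "i < length xs \<Longrightarrow> length (face n i xs) = length xs - 1"
  unfolding face_def by simp

lemma face_nth:
  assumes "i < length xs" "m < length xs - 1"
  shows "face n i xs ! m = (if m < i then xs ! m else laver n (xs ! i) (xs ! Suc m))"
  using assms unfolding face_def by (auto simp: nth_append min_def)

lemma face_tuples:
  assumes xs: "xs \<in> tuples n (Suc k)" and i: "i < Suc k"
  shows "face n i xs \<in> tuples n k"
proof -
  have l: "length xs = Suc k" and s: "set xs \<subseteq> {1..2^n}" using xs unfolding tuples_def by auto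
  have "length (face n i xs) = k" using face_len[of i xs n] l i by simp
  moreover have "set (face n i xs) \<subseteq> {1..2^n}"
  proof
    fix y assume "y \<in> set (face n i xs)"
    then obtain m where m: "m < k" "y = face n i xs ! m"
      using \<open>length (face n i xs) = k\<close> by (metis in_set_conv_nth)
    have xi: "xs ! i \<in> {1..2^n}" using s l i nth_mem by (metis subsetD)
    have xm: "xs ! m \<in> {1..2^n}" "xs ! Suc m \<in> {1..2^n}" using s l m nth_mem by (metis Suc_mono less_SucI subsetD)+
    show "y \<in> {1..2^n}" using face_nth[of i xs m n] m l i xi xm laver_range by auto
  qed
  ultimately show ?thesis unfolding tuples_def by auto
qed

lemma face_LD:
  assumes xs: "xs \<in> tuples n (Suc k)" and ij: "i \<le> j" "j < k"
  shows "face n j (face n i xs) = face n i (face n (Suc j) xs)"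
proof -
  have l: "length xs = Suc k" and s: "set xs \<subseteq> {1..2^n}" using xs unfolding tuples_def by auto
  have el: "m < Suc k \<Longrightarrow> xs ! m \<in> {1..2^n}" for m using s l nth_mem by (metis subsetD)
  let ?L = "laver n"
  have l1: "length (face n i xs) = k" "length (face n (Suc j) xs) = k" using face_len l ij by auto
  show ?thesis
  proof (rule nth_equalityI)
    show "length (face n j (face n i xs)) = length (face n i (face n (Suc j) xs))"
      using face_len l1 ij by simp
  next
    fix m assume "m < length (face n j (face n i xs))"
    hence m: "m < k - 1" using face_len l1 ij by simp
    have lhs: "face n j (face n i xs) ! m = (if m < j then face n i xs ! m
                  else ?L (face n i xs ! j) (face n i xs ! Suc m))"
      using face_nth[of j "face n i xs" m n] l1 m ij by simp
    have rhs: "face n i (face n (Suc j) xs) ! m = (if m < i then face n (Suc j) xs ! m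
                  else ?L (face n (Suc j) xs ! i) (face n (Suc j) xs ! Suc m))"
      using face_nth[of i "face n (Suc j) xs" m n] l1 m ij by simp
    have fi: "p < k \<Longrightarrow> face n i xs ! p = (if p < i then xs ! p else ?L (xs ! i) (xs ! Suc p))" for p
      using face_nth[of i xs p n] l ij by simp
    have fj: "p < k \<Longrightarrow> face n (Suc j) xs ! p = (if p < Suc j then xs ! p else ?L (xs ! Suc j) (xs ! Suc p))" for p
      using face_nth[of "Suc j" xs p n] l ij by simp
    consider "m < i" | "i \<le> m" "m < j" | "j \<le> m" by linarith
    then show "face n j (face n i xs) ! m = face n i (face n (Suc j) xs) ! m"
    proof cases
      case 1 then show ?thesis using lhs rhs fi fj m ij by simp
    next
      case 2 then show ?thesis using lhs rhs fi fj m ij by simp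
    next
      case 3
      have "face n j (face n i xs) ! m = ?L (?L (xs ! i) (xs ! Suc j)) (?L (xs ! i) (xs ! Suc (Suc m)))"
        using lhs fi[of j] fi[of "Suc m"] 3 m ij by simp
      also have "\<dots> = ?L (xs ! i) (?L (xs ! Suc j) (xs ! Suc (Suc m)))"
        using laver_LD[of "xs ! i" n "xs ! Suc j" "xs ! Suc (Suc m)"] el m ij by simp
      also have "\<dots> = face n i (face n (Suc j) xs) ! m"
        using rhs fj[of i] fj[of "Suc m"] 3 m ij by simp
      finally show ?thesis .
    qed
  qed
qed



definition D :: "nat \<Rightarrow> nat \<Rightarrow> nat list \<Rightarrow> nat list \<Rightarrow> int" where
  "D n k xs ys = (\<Sum>i<k. (-1) ^ i * (if face n i xs = ys then 1 else 0))"

lemma bdry_alt: "bdry n k c ys = (\<Sum>xs\<in>tuples n k. c xs * D n k xs ys)"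
  unfolding bdry_def D_def by (simp add: sum_distrib_left mult.assoc mult.left_commute)

lemma comb:
  fixes F :: "nat \<Rightarrow> nat \<Rightarrow> int"
  shows "(\<forall>i j. i \<le> j \<longrightarrow> j < k \<longrightarrow> F i j = - F (Suc j) i) \<Longrightarrow> (\<Sum>i<Suc k. \<Sum>j<k. F i j) = 0"
proof (induction k)
  case 0 then show ?case by simp
next
  case (Suc k)
  have IH: "(\<Sum>i<Suc k. \<Sum>j<k. F i j) = 0" using Suc by auto
  have "(\<Sum>i<Suc (Suc k). \<Sum>j<Suc k. F i j)
      = (\<Sum>i<Suc k. \<Sum>j<Suc k. F i j) + (\<Sum>j<Suc k. F (Suc k) j)" by simp
  also have "(\<Sum>i<Suc k. \<Sum>j<Suc k. F i j) = (\<Sum>i<Suc k. \<Sum>j<k. F i j) + (\<Sum>i<Suc k. F i k)"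
    by (simp add: sum.distrib)
  also have "(\<Sum>j<Suc k. F (Suc k) j) = - (\<Sum>i<Suc k. F i k)"
  proof -
    have "(\<Sum>j<Suc k. F (Suc k) j) = (\<Sum>j<Suc k. - F j k)"
      using Suc.prems by (intro sum.cong) (auto simp: less_Suc_eq_le)
    then show ?thesis by (simp add: sum_negf)
  qed
  finally show ?case using IH by simp
qed

lemma delta_sum:
  assumes "finite S" "a \<in> S"
  shows "(\<Sum>z\<in>S. (if a = z then 1 else 0) * g z) = (g a :: int)"
proof -
  have "(\<Sum>z\<in>S. (if a = z then 1 else 0) * g z) = (\<Sum>z\<in>S. if a = z then g z else 0)"
    by (intro sum.cong) auto
  then show ?thesis using assms by simp
qed

lemma bdry_bdry: "bdry n k (bdry n (Suc k) c) = (\<lambda>_. 0)"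
proof
  fix ys
  have inner: "(\<Sum>zs\<in>tuples n k. D n (Suc k) xs zs * D n k zs ys) = 0" if xs: "xs \<in> tuples n (Suc k)" for xs
  proof -
    have "(\<Sum>zs\<in>tuples n k. D n (Suc k) xs zs * D n k zs ys)
        = (\<Sum>zs\<in>tuples n k. \<Sum>i<Suc k. (-1) ^ i * ((if face n i xs = zs then 1 else 0) * D n k zs ys))"
      unfolding D_def[of n "Suc k"] by (simp add: sum_distrib_right mult.assoc del: sum.lessThan_Suc)
    also have "\<dots> = (\<Sum>i<Suc k. (-1) ^ i * (\<Sum>zs\<in>tuples n k. (if face n i xs = zs then 1 else 0) * D n k zs ys))"
      by (subst sum.swap) (simp add: sum_distrib_left del: sum.lessThan_Suc)
    also have "\<dots> = (\<Sum>i<Suc k. (-1) ^ i * D n k (face n i xs) ys)"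
      using delta_sum[OF fin_tuples face_tuples[OF xs]] by (simp del: sum.lessThan_Suc)
    also have "\<dots> = (\<Sum>i<Suc k. \<Sum>j<k. (-1) ^ i * ((-1) ^ j * (if face n j (face n i xs) = ys then 1 else 0)))"
      unfolding D_def by (simp add: sum_distrib_left del: sum.lessThan_Suc)
    also have "\<dots> = 0"
    proof (rule comb, intro allI impI)
      fix i j assume ij: "i \<le> j" "j < k"
      show "(-1) ^ i * ((-1) ^ j * (if face n j (face n i xs) = ys then 1 else 0)) =
          - ((-1) ^ Suc j * ((-1) ^ i * (if face n i (face n (Suc j) xs) = ys then 1 else 0)) :: int)"
        using face_LD[OF xs ij] by simp
    qed
    finally show ?thesis .
  qed
  have "bdry n k (bdry n (Suc k) c) ys
      = (\<Sum>zs\<in>tuples n k. (\<Sum>xs\<in>tuples n (Suc k). c xs * D n (Suc k) xs zs) * D n k zs ys)"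
    by (simp add: bdry_alt)
  also have "\<dots> = (\<Sum>zs\<in>tuples n k. \<Sum>xs\<in>tuples n (Suc k). c xs * (D n (Suc k) xs zs * D n k zs ys))"
    by (simp add: sum_distrib_right mult.assoc)
  also have "\<dots> = (\<Sum>xs\<in>tuples n (Suc k). c xs * (\<Sum>zs\<in>tuples n k. D n (Suc k) xs zs * D n k zs ys))"
    by (subst sum.swap) (simp add: sum_distrib_left)
  also have "\<dots> = 0" using inner by simp
  finally show "bdry n k (bdry n (Suc k) c) ys = 0" .
qed



lemma bdry_chains: "bdry n (Suc k) c \<in> chains n k"
  unfolding chains_def
proof (intro CollectI allI impI)
  fix ys assume nz: "bdry n (Suc k) c ys \<noteq> 0"
  show "ys \<in> tuples n k"
  proof (rule ccontr)
    assume ys: "ys \<notin> tuples n k"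
    have "bdry n (Suc k) c ys = 0"
      unfolding bdry_def
    proof (intro sum.neutral ballI)
      fix xs i assume xs: "xs \<in> tuples n (Suc k)" and i: "i \<in> {..<Suc k}"
      have "face n i xs \<noteq> ys" using face_tuples[OF xs] i ys by auto
      then show "(-1) ^ i * c xs * (if face n i xs = ys then 1 else 0) = 0" by simp
    qed
    then show False using nz by simp
  qed
qed

definition hc :: "nat \<Rightarrow> (nat list \<Rightarrow> int) \<Rightarrow> nat list \<Rightarrow> int" where
  "hc n c = (\<lambda>ys. if ys \<noteq> [] \<and> hd ys = 2 ^ n then c (tl ys) else 0)"

lemma hc_chains:
  assumes c: "c \<in> chains n k" shows "hc n c \<in> chains n (Suc k)"
  unfolding chains_def
proof (intro CollectI allI impI)
  fix ys assume nz: "hc n c ys \<noteq> 0"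
  then have ne: "ys \<noteq> []" and h: "hd ys = 2 ^ n" and t: "c (tl ys) \<noteq> 0"
    unfolding hc_def by (auto split: if_splits)
  have tt: "tl ys \<in> tuples n k" using c t unfolding chains_def by blast
  have ys: "ys = 2 ^ n # tl ys" using ne h by (cases ys) auto
  have one: "(1::nat) \<le> 2 ^ n" by simp
  have "length (tl ys) = k" "set (tl ys) \<subseteq> {1..2^n}" using tt unfolding tuples_def by auto
  then have "length (2 ^ n # tl ys) = Suc k" "set (2 ^ n # tl ys) \<subseteq> {1..2^n}" using one by auto
  then show "ys \<in> tuples n (Suc k)" using ys unfolding tuples_def by simp
qed


lemma face0_top: "zs \<in> tuples n k \<Longrightarrow> face n 0 (2 ^ n # zs) = zs"
  unfolding face_def tuples_def by (auto intro!: map_idI laver_top)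

lemma faceS_cons: "face n (Suc i) (x # zs) = x # face n i zs"
  unfolding face_def by simp

lemma D_cons:
  assumes zs: "zs \<in> tuples n k"
  shows "D n (Suc k) (2 ^ n # zs) ys = (if zs = ys then 1 else 0)
          - (\<Sum>i<k. (-1) ^ i * (if 2 ^ n # face n i zs = ys then 1 else 0))"
proof -
  have "D n (Suc k) (2 ^ n # zs) ys = (if face n 0 (2 ^ n # zs) = ys then 1 else 0)
      + (\<Sum>i<k. (-1) ^ Suc i * (if face n (Suc i) (2 ^ n # zs) = ys then 1 else 0))"
    unfolding D_def by (subst sum.lessThan_Suc_shift) simp
  also have "\<dots> = (if zs = ys then 1 else 0)
      + (\<Sum>i<k. - ((-1) ^ i * (if 2 ^ n # face n i zs = ys then 1 else 0)))"
    using face0_top[OF zs] by (simp add: faceS_cons)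
  finally show ?thesis by (simp add: sum_negf)
qed

lemma bdry_hc:
  assumes c: "c \<in> chains n k"
  shows "bdry n (Suc k) (hc n c) ys = c ys - (if ys \<noteq> [] \<and> hd ys = 2 ^ n then bdry n k c (tl ys) else 0)"
proof -
  let ?N = "(2::nat) ^ n"
  have one: "(1::nat) \<le> 2 ^ n" by simp
  have sub: "Cons ?N ` tuples n k \<subseteq> tuples n (Suc k)"
  proof
    fix xs assume "xs \<in> Cons ?N ` tuples n k"
    then obtain zs where zs: "zs \<in> tuples n k" "xs = ?N # zs" by blast
    have "length zs = k" "set zs \<subseteq> {1..2^n}" using zs(1) unfolding tuples_def by auto
    then have "length (?N # zs) = Suc k" "set (?N # zs) \<subseteq> {1..2^n}" using one by auto
    then show "xs \<in> tuples n (Suc k)" using zs(2) unfolding tuples_def by simp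
  qed
  have zero: "\<forall>xs\<in>tuples n (Suc k) - Cons ?N ` tuples n k. hc n c xs * D n (Suc k) xs ys = 0"
  proof
    fix xs assume xs: "xs \<in> tuples n (Suc k) - Cons ?N ` tuples n k"
    show "hc n c xs * D n (Suc k) xs ys = 0"
    proof (cases "hc n c xs = 0")
      case False
      then have ne: "xs \<noteq> []" and h: "hd xs = ?N" and t: "c (tl xs) \<noteq> 0"
        unfolding hc_def by (auto split: if_splits)
      have "tl xs \<in> tuples n k" using c t unfolding chains_def by blast
      moreover have "xs = ?N # tl xs" using ne h by (cases xs) auto
      ultimately have "xs \<in> Cons ?N ` tuples n k" by blast
      then show ?thesis using xs by blast
    qed simp
  qed
  have "bdry n (Suc k) (hc n c) ys = (\<Sum>xs\<in>tuples n (Suc k). hc n c xs * D n (Suc k) xs ys)"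
    by (rule bdry_alt)
  also have "\<dots> = (\<Sum>xs\<in>Cons ?N ` tuples n k. hc n c xs * D n (Suc k) xs ys)"
    using sum.mono_neutral_right[OF fin_tuples sub zero] by simp
  also have "\<dots> = (\<Sum>zs\<in>tuples n k. c zs * D n (Suc k) (?N # zs) ys)"
    by (subst sum.reindex) (auto simp: hc_def inj_on_def)
  also have "\<dots> = (\<Sum>zs\<in>tuples n k. c zs * (if zs = ys then 1 else 0)
          - c zs * (\<Sum>i<k. (-1) ^ i * (if ?N # face n i zs = ys then 1 else 0)))"
    by (intro sum.cong refl) (simp add: D_cons right_diff_distrib)
  also have "\<dots> = (\<Sum>zs\<in>tuples n k. c zs * (if zs = ys then 1 else 0))
          - (\<Sum>zs\<in>tuples n k. c zs * (\<Sum>i<k. (-1) ^ i * (if ?N # face n i zs = ys then 1 else 0)))"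
    by (simp add: sum_subtractf)
  also have "(\<Sum>zs\<in>tuples n k. c zs * (if zs = ys then 1 else 0)) = c ys"
  proof (cases "ys \<in> tuples n k")
    case True
    have "(\<Sum>zs\<in>tuples n k. c zs * (if zs = ys then 1 else 0)) = (\<Sum>zs\<in>tuples n k. if zs = ys then c zs else 0)"
      by (intro sum.cong) auto
    then show ?thesis using True fin_tuples by simp
  next
    case False
    then have "c ys = 0" using c unfolding chains_def by blast
    moreover have "(\<Sum>zs\<in>tuples n k. c zs * (if zs = ys then 1 else 0)) = 0"
      using False by (intro sum.neutral) auto
    ultimately show ?thesis by simp
  qed
  also have "(\<Sum>zs\<in>tuples n k. c zs * (\<Sum>i<k. (-1) ^ i * (if ?N # face n i zs = ys then 1 else 0)))
      = (if ys \<noteq> [] \<and> hd ys = ?N then bdry n k c (tl ys) else 0)"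
  proof (cases "ys \<noteq> [] \<and> hd ys = ?N")
    case True
    then have e: "ys = ?N # tl ys" by (cases ys) auto
    have "\<And>zs i. (?N # face n i zs = ys) = (face n i zs = tl ys)" by (subst e) auto
    then show ?thesis using True by (simp add: bdry_alt D_def)
  next
    case False
    then have "\<And>zs i. (?N # face n i zs = ys) = False" by auto
    then show ?thesis using False by auto
  qed
  finally show ?thesis .
qed

theorem proposition1p12:
  fixes n k :: nat
  shows "{c \<in> chains n k. bdry n k c = (\<lambda>_. 0)} = bdry n (Suc k) ` chains n (Suc k)"
proof (intro equalityI subsetI)
  fix c assume "c \<in> {c \<in> chains n k. bdry n k c = (\<lambda>_. 0)}"
  then have c: "c \<in> chains n k" and z: "bdry n k c = (\<lambda>_. 0)" by auto
  have "bdry n (Suc k) (hc n c) = c"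
  proof
    fix ys show "bdry n (Suc k) (hc n c) ys = c ys" using bdry_hc[OF c, of ys] z by simp
  qed
  then show "c \<in> bdry n (Suc k) ` chains n (Suc k)" using hc_chains[OF c] by (metis image_eqI)
next
  fix c assume "c \<in> bdry n (Suc k) ` chains n (Suc k)"
  then obtain d where "c = bdry n (Suc k) d" by blast
  then show "c \<in> {c \<in> chains n k. bdry n k c = (\<lambda>_. 0)}" using bdry_chains bdry_bdry by simp
qed


end
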